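(* Consider the following Markov decision process modelling transmit-power selection in an energy harvesting transmitter. Let $Q_{\max}$ be a positive integer. The state (battery level) at slot $t$ is $Q_t \in \{0,1,\dots,Q_{\max}\}$. In state $Q$ the allowed actions (transmit power levels) form a set $\mathcal{A}_Q \subseteq \{0,1,\dots,Q\}$, where $\mathcal{A}_0=\{0\}$ and, for $Q\ge 1$, every allowed action is positive, i.e. $\mathcal{A}_Q\subseteq\{1,\dots,Q\}$. The harvested energies $p_0,p_1,\dots$ are i.i.d. nonnegative integer random variables with $\Pr\{p_t=p\}>0$ for every $p\in\{0,1,\dots,Q_{\max}\}$. If action $q_t\in\mathcal{A}_{Q_t}$ is taken, the next state is $Q_{t+1}=\min\{Q_t-q_t+p_t,\;Q_{\max}\}$. Then this MDP is ergodic: for every deterministic stationary policy $\beta$ (a map assigning to each state $Q$ an action $\beta(Q)\in\mathcal{A}_Q$), the Markov chain of states induced by playing $\beta$ is irreducible and aperiodic. *)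

theory Defs
  imports "HOL-Probability.Probability_Mass_Function"
begin

definition eh_kernel :: "nat \<Rightarrow> nat pmf \<Rightarrow> (nat \<Rightarrow> nat) \<Rightarrow> nat \<Rightarrow> nat pmf" where
  "eh_kernel Qmax h beta Q = map_pmf (\<lambda>p. min (Q - beta Q + p) Qmax) h"

fun n_step :: "('s \<Rightarrow> 's pmf) \<Rightarrow> nat \<Rightarrow> 's \<Rightarrow> 's pmf" where
  "n_step K 0 i = return_pmf i"
| "n_step K (Suc n) i = bind_pmf (n_step K n i) K"

definition irreducible_on :: "'s set \<Rightarrow> ('s \<Rightarrow> 's pmf) \<Rightarrow> bool" where
  "irreducible_on S K \<longleftrightarrow> (\<forall>i\<in>S. \<forall>j\<in>S. \<exists>n>0. pmf (n_step K n i) j > 0)"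

definition period :: "('s \<Rightarrow> 's pmf) \<Rightarrow> 's \<Rightarrow> nat" where
  "period K i = Gcd {n. n > 0 \<and> pmf (n_step K n i) i > 0}"

definition aperiodic_on :: "'s set \<Rightarrow> ('s \<Rightarrow> 's pmf) \<Rightarrow> bool" where
  "aperiodic_on S K \<longleftrightarrow> (\<forall>i\<in>S. period K i = 1)"

end

theory Submission
  imports Defs
begin

lemma pos_iff_set: "(pmf M x > 0) = (x \<in> set_pmf M)"
  by (simp add: pmf_positive_iff)

lemma n_step_comp:
  assumes "j \<in> set_pmf (n_step K n i)"
  shows "k \<in> set_pmf (n_step K m j) \<Longrightarrow> k \<in> set_pmf (n_step K (n + m) i)"
proof (induction m arbitrary: k)
  case 0
  then show ?case using assms by simp
next
  case (Suc m)
  then obtain l where "l \<in> set_pmf (n_step K m j)" "k \<in> set_pmf (K l)" by auto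
  then show ?case using Suc.IH by auto
qed

theorem proposition1:
  fixes Qmax :: nat
    and A :: "nat \<Rightarrow> nat set"
    and h :: "nat pmf"
    and beta :: "nat \<Rightarrow> nat"
  assumes Qmax_pos: "Qmax > 0"
    and A0: "A 0 = {0}"
    and A_pos: "\<And>Q. 1 \<le> Q \<Longrightarrow> Q \<le> Qmax \<Longrightarrow> A Q \<subseteq> {1..Q}"
    and h_pos: "\<And>p. p \<le> Qmax \<Longrightarrow> pmf h p > 0"
    and beta_allowed: "\<And>Q. Q \<le> Qmax \<Longrightarrow> beta Q \<in> A Q"
  shows "irreducible_on {0..Qmax} (eh_kernel Qmax h beta)
       \<and> aperiodic_on {0..Qmax} (eh_kernel Qmax h beta)"
proof -
  define K where "K = eh_kernel Qmax h beta"
  have step: "j \<in> set_pmf (K Q)" if "j \<le> Qmax" "Q - beta Q \<le> j" for Q j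
  proof -
    have "j - (Q - beta Q) \<in> set_pmf h" using h_pos[of "j - (Q - beta Q)"] that
      by (simp add: pmf_positive_iff)
    moreover have "j = min (Q - beta Q + (j - (Q - beta Q))) Qmax" using that by simp
    ultimately show ?thesis unfolding K_def eh_kernel_def by auto
  qed
  have one: "j \<in> set_pmf (n_step K 1 Q)" if "j \<le> Qmax" "Q - beta Q \<le> j" for Q j
    using step[OF that] by simp
  have zero: "\<exists>n. 0 \<in> set_pmf (n_step K n Q)" if "Q \<le> Qmax" for Q
    using that
  proof (induction Q rule: less_induct)
    case (less Q)
    show ?case
    proof (cases "Q = 0")
      case True
      have "0 \<in> set_pmf (n_step K 0 Q)" using True by simp
      then show ?thesis by blast
    next
      case False
      then have "1 \<le> Q" by simp
      then have "beta Q \<in> {1..Q}" using A_pos[OF _ less.prems] beta_allowed[OF less.prems] by blast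
      then have lt: "Q - beta Q < Q" by auto
      have "Q - beta Q \<le> Qmax" using less.prems by simp
      then obtain n where n: "0 \<in> set_pmf (n_step K n (Q - beta Q))"
        using less.IH[OF lt] by blast
      have "Q - beta Q \<in> set_pmf (n_step K 1 Q)" using one less.prems lt by simp
      from n_step_comp[OF this n] show ?thesis by blast
    qed
  qed
  have irr: "irreducible_on {0..Qmax} K"
    unfolding irreducible_on_def pos_iff_set
  proof (intro ballI)
    fix i j assume "i \<in> {0..Qmax}" "j \<in> {0..Qmax}"
    then obtain n where n: "0 \<in> set_pmf (n_step K n i)" using zero by auto
    have "j \<in> set_pmf (n_step K 1 0)" using one \<open>j \<in> {0..Qmax}\<close> by simp
    from n_step_comp[OF n this] show "\<exists>n>0. j \<in> set_pmf (n_step K n i)"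
      by (rule_tac x="n+1" in exI) simp
  qed
  have ap: "aperiodic_on {0..Qmax} K"
    unfolding aperiodic_on_def period_def pos_iff_set
  proof
    fix i assume i: "i \<in> {0..Qmax}"
    then obtain n where n: "0 \<in> set_pmf (n_step K n i)" using zero by auto
    have a: "i \<in> set_pmf (n_step K 1 0)" using one i by simp
    have b: "0 \<in> set_pmf (n_step K 1 0)" using one Qmax_pos by simp
    have c: "i \<in> set_pmf (n_step K (1 + 1) 0)" using n_step_comp[OF b a] .
    have m1: "n + 1 \<in> {n. n > 0 \<and> i \<in> set_pmf (n_step K n i)}"
      using n_step_comp[OF n a] by simp
    have m2: "n + 2 \<in> {n. n > 0 \<and> i \<in> set_pmf (n_step K n i)}"
    proof -
      have "i \<in> set_pmf (n_step K (n + 2) i)" using n_step_comp[OF n c] by (simp only: one_add_one)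
      then show ?thesis by (intro CollectI conjI) (simp, assumption)
    qed
    let ?G = "Gcd {n. n > 0 \<and> i \<in> set_pmf (n_step K n i)}"
    have g1: "?G dvd n + 1" by (rule Gcd_dvd[OF m1])
    have g2: "?G dvd n + 2" by (rule Gcd_dvd[OF m2])
    have "?G dvd (n + 2) - (n + 1)" by (rule dvd_diff_nat[OF g2 g1])
    moreover have "(n + 2) - (n + 1) = (1::nat)" by arith
    ultimately show "?G = 1" by simp
  qed
  show ?thesis using irr ap K_def by simp
qed

end
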